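(* Let $A\in\mathbb{R}^{m\times N}$ satisfy the robust binary null space property with constants $0<\rho<1$ and $\tau>0$ relative to a set $K\subseteq[N]$. Let $b=A\mathbb{1}_K+e$ with $e\in\mathbb{R}^m$, $\|e\|_2\le\eta$. Then every solution $\hat z$ of $$\min\|z\|_1\quad\text{subject to}\quad \|Az-b\|_2\le\eta\ \text{ and }\ z\in[0,1]^N$$ satisfies $\|\hat z-\mathbb{1}_K\|_1\le\frac{4\tau}{1-\rho}\eta$.
   Context: $K^C=[N]\setminus K$; $\mathbb{1}_K$ has entries $1$ on $K$, $0$ elsewhere. $H_K=\{w\in\mathbb{R}^N: w_i\le 0 \text{ for } i\in K,\ w_i\ge 0\text{ for } i\in K^C\}$. $A$ satisfies the robust binary null space property with constants $\rho,\tau$ relative to $K$ if $-\sum_{i\in K}v_i\le\rho\sum_{i\in K^C}v_i+\tau\|Av\|_2$ for every $v\in H_K$. *)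

theory Defs
  imports "HOL-Analysis.Analysis"
begin

text \<open>Vectors in R^N are real^'n (index type 'n with CARD('n) = N); matrices A in R^(m x N)
are real^'n^'m. The Euclidean norm on real^'m is the library norm.\<close>

definition l1norm :: "real^'n \<Rightarrow> real" where
  "l1norm v = (\<Sum>i\<in>UNIV. \<bar>v $ i\<bar>)"

definition indic_vec :: "'n set \<Rightarrow> real^'n" where
  "indic_vec K = (\<chi> i. if i \<in> K then 1 else 0)"

definition H_set :: "'n set \<Rightarrow> (real^'n) set" where
  "H_set K = {w. (\<forall>i\<in>K. w $ i \<le> 0) \<and> (\<forall>i\<in>- K. w $ i \<ge> 0)}"

definition robust_binary_nsp :: "real^'n^'m \<Rightarrow> real \<Rightarrow> real \<Rightarrow> 'n set \<Rightarrow> bool" where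
  "robust_binary_nsp A \<rho> \<tau> K \<longleftrightarrow>
     (\<forall>v\<in>H_set K. - (\<Sum>i\<in>K. v $ i) \<le> \<rho> * (\<Sum>i\<in>- K. v $ i) + \<tau> * norm (A *v v))"

definition feasible :: "real^'n^'m \<Rightarrow> real^'m \<Rightarrow> real \<Rightarrow> real^'n \<Rightarrow> bool" where
  "feasible A b \<eta> z \<longleftrightarrow> norm (A *v z - b) \<le> \<eta> \<and> (\<forall>i. 0 \<le> z $ i \<and> z $ i \<le> 1)"

definition is_l1_solution :: "real^'n^'m \<Rightarrow> real^'m \<Rightarrow> real \<Rightarrow> real^'n \<Rightarrow> bool" where
  "is_l1_solution A b \<eta> z \<longleftrightarrow> feasible A b \<eta> z \<and> (\<forall>y. feasible A b \<eta> y \<longrightarrow> l1norm z \<le> l1norm y)"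

end

theory Submission
  imports Defs
begin

lemma split_sum:
  fixes f :: "'n::finite \<Rightarrow> real"
  shows "(\<Sum>i\<in>UNIV. f i) = (\<Sum>i\<in>K. f i) + (\<Sum>i\<in>-K. f i)"
proof -
  have "UNIV = K \<union> -K" by auto
  then have "(\<Sum>i\<in>UNIV. f i) = (\<Sum>i\<in>K \<union> -K. f i)" by simp
  also have "\<dots> = (\<Sum>i\<in>K. f i) + (\<Sum>i\<in>-K. f i)"
    by (rule sum.union_disjoint) auto
  finally show ?thesis .
qed

theorem theorem2p13:
  fixes A :: "real^'n^'m" and K :: "'n set" and e :: "real^'m" and b :: "real^'m"
    and \<rho> \<tau> \<eta> :: real and zhat :: "real^'n"
  assumes "robust_binary_nsp A \<rho> \<tau> K"
    and "0 < \<rho>" and "\<rho> < 1" and "0 < \<tau>"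
    and "b = A *v indic_vec K + e"
    and "norm e \<le> \<eta>"
    and "is_l1_solution A b \<eta> zhat"
  shows "l1norm (zhat - indic_vec K) \<le> 4 * \<tau> / (1 - \<rho>) * \<eta>"
proof -
  define v where "v = zhat - indic_vec K"
  have fz: "feasible A b \<eta> zhat" and opt: "\<And>y. feasible A b \<eta> y \<Longrightarrow> l1norm zhat \<le> l1norm y"
    using assms(7) unfolding is_l1_solution_def by auto
  have zb: "\<And>i. 0 \<le> zhat $ i \<and> zhat $ i \<le> 1" and nz: "norm (A *v zhat - b) \<le> \<eta>"
    using fz unfolding feasible_def by auto
  have vK: "\<And>i. i \<in> K \<Longrightarrow> v $ i = zhat $ i - 1"
    and vC: "\<And>i. i \<notin> K \<Longrightarrow> v $ i = zhat $ i"
    by (auto simp: v_def indic_vec_def)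
  have vH: "v \<in> H_set K" unfolding H_set_def using vK vC zb by force
  have fi: "feasible A b \<eta> (indic_vec K)"
    unfolding feasible_def using assms(5,6) by (auto simp: indic_vec_def)
  have l1i: "l1norm (indic_vec K) = (\<Sum>i\<in>K. 1)"
    unfolding l1norm_def by (subst split_sum[where K=K]) (simp add: indic_vec_def)
  have l1z: "l1norm zhat = (\<Sum>i\<in>K. 1 + v $ i) + (\<Sum>i\<in>-K. v $ i)"
    unfolding l1norm_def
    by (subst split_sum[where K=K]) (intro arg_cong2[where f="(+)"] sum.cong; simp add: vK vC abs_of_nonneg zb)
  define S where "S = - (\<Sum>i\<in>K. v $ i)"
  define T where "T = (\<Sum>i\<in>-K. v $ i)"
  have "l1norm zhat \<le> l1norm (indic_vec K)" using opt fi by blast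
  then have TS: "T \<le> S" using l1z l1i unfolding S_def T_def by (simp add: sum.distrib)
  have T0: "0 \<le> T" unfolding T_def by (rule sum_nonneg) (simp add: vC zb)
  have Av: "A *v v = (A *v zhat - b) + e"
    using assms(5) by (simp add: v_def matrix_vector_mult_diff_distrib)
  have nAv: "norm (A *v v) \<le> 2 * \<eta>"
    using Av nz assms(6) norm_triangle_ineq[of "A *v zhat - b" e] by simp
  have "S \<le> \<rho> * T + \<tau> * norm (A *v v)"
    using assms(1) vH unfolding robust_binary_nsp_def S_def T_def by blast
  also have "\<dots> \<le> \<rho> * S + \<tau> * (2 * \<eta>)"
    using TS nAv assms(2,4) by (intro add_mono mult_left_mono) auto
  finally have "S * (1 - \<rho>) \<le> 2 * \<tau> * \<eta>" by (simp add: algebra_simps)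
  then have Sb: "S \<le> 2 * \<tau> * \<eta> / (1 - \<rho>)" using assms(3) by (simp add: pos_le_divide_eq)
  have "l1norm v = S + T"
    unfolding l1norm_def S_def T_def
    by (subst split_sum[where K=K]) (intro arg_cong2[where f="(+)"];
        simp add: vK vC zb abs_of_nonneg abs_of_nonpos sum_negf[symmetric])
  then have "l1norm v \<le> 2 * (2 * \<tau> * \<eta> / (1 - \<rho>))" using TS Sb by linarith
  then show ?thesis unfolding v_def by (simp add: field_simps)
qed

end
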